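(* Let $G$ be a finite simple connected graph other than $K_2$ and let $U$ be a subset of the leaves of $G$. Then $\rho\circ\lambda_U(G)$ and $G$ have the same reduction.
   Context: A leaf is a vertex of degree one; two distinct vertices are siblings if they have the same closed neighborhood $N[v]=\{v\}\cup N(v)$. For a graph $G\neq K_2$ and a set $S$ of its leaves, $\lambda_S(G)$ removes the vertices of $S$; $\lambda(G)$ removes all leaves. $\rho(G)$ contracts each maximal group of siblings to a single vertex. The reduction of a connected graph $G\neq K_2$ is $(\rho\circ\lambda)^n(G)$ for $n$ large enough that this graph has neither leaves nor siblings (equivalently, obtained by repeatedly removing all leaves and contracting groups of siblings). Graphs are compared up to isomorphism. *)

theory Defs
  imports Main
begin

text \<open>Finite simple graphs: a vertex set and a symmetric irreflexive adjacency
relation on it (stored as ordered pairs, both orientations present).\<close>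

record 'a sgraph =
  verts :: "'a set"
  adj   :: "('a \<times> 'a) set"

definition simple_graph :: "'a sgraph \<Rightarrow> bool" where
  "simple_graph G \<longleftrightarrow> finite (verts G) \<and> adj G \<subseteq> verts G \<times> verts G
     \<and> sym (adj G) \<and> irrefl (adj G)"

definition connected_graph :: "'a sgraph \<Rightarrow> bool" where
  "connected_graph G \<longleftrightarrow> verts G \<noteq> {} \<and>
     (\<forall>u\<in>verts G. \<forall>v\<in>verts G. (u, v) \<in> (adj G)\<^sup>*)"

definition is_K2 :: "'a sgraph \<Rightarrow> bool" where
  "is_K2 G \<longleftrightarrow> (\<exists>u v. u \<noteq> v \<and> verts G = {u, v} \<and> (u, v) \<in> adj G)"

definition nbhd :: "'a sgraph \<Rightarrow> 'a \<Rightarrow> 'a set" where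
  "nbhd G v = {u. (v, u) \<in> adj G}"

definition closed_nbhd :: "'a sgraph \<Rightarrow> 'a \<Rightarrow> 'a set" where
  "closed_nbhd G v = insert v (nbhd G v)"

definition leaf :: "'a sgraph \<Rightarrow> 'a \<Rightarrow> bool" where
  "leaf G v \<longleftrightarrow> v \<in> verts G \<and> card (nbhd G v) = 1"

definition leaves :: "'a sgraph \<Rightarrow> 'a set" where
  "leaves G = {v. leaf G v}"

definition siblings :: "'a sgraph \<Rightarrow> 'a \<Rightarrow> 'a \<Rightarrow> bool" where
  "siblings G u v \<longleftrightarrow> u \<in> verts G \<and> v \<in> verts G \<and> u \<noteq> v
     \<and> closed_nbhd G u = closed_nbhd G v"

definition delete_vertices :: "'a set \<Rightarrow> 'a sgraph \<Rightarrow> 'a sgraph" where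
  "delete_vertices S G =
     \<lparr> verts = verts G - S, adj = adj G \<inter> ((verts G - S) \<times> (verts G - S)) \<rparr>"

definition lambda_S :: "'a set \<Rightarrow> 'a sgraph \<Rightarrow> 'a sgraph" where
  "lambda_S S G = delete_vertices S G"

definition lambda :: "'a sgraph \<Rightarrow> 'a sgraph" where
  "lambda G = delete_vertices (leaves G) G"

text \<open>\<rho>: contract every maximal group of siblings to a single vertex.  Since
siblings have identical closed neighbourhoods, this is realised (up to
isomorphism) by keeping one chosen representative of each group, namely of
each class of the equivalence "same closed neighbourhood", and taking the
induced subgraph on the representatives.\<close>
definition sib_rep :: "'a sgraph \<Rightarrow> 'a \<Rightarrow> 'a" where
  "sib_rep G v = (SOME u. u \<in> {w \<in> verts G. closed_nbhd G w = closed_nbhd G v})"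

definition rho :: "'a sgraph \<Rightarrow> 'a sgraph" where
  "rho G = \<lparr> verts = sib_rep G ` verts G,
             adj = adj G \<inter> (sib_rep G ` verts G \<times> sib_rep G ` verts G) \<rparr>"

definition no_leaves_no_siblings :: "'a sgraph \<Rightarrow> bool" where
  "no_leaves_no_siblings G \<longleftrightarrow> (\<forall>v. \<not> leaf G v) \<and> (\<forall>u v. \<not> siblings G u v)"

definition reduction :: "'a sgraph \<Rightarrow> 'a sgraph" where
  "reduction G = ((rho \<circ> lambda) ^^
     (LEAST n. no_leaves_no_siblings (((rho \<circ> lambda) ^^ n) G))) G"

definition graph_iso :: "'a sgraph \<Rightarrow> 'b sgraph \<Rightarrow> bool" where
  "graph_iso G H \<longleftrightarrow> (\<exists>f. bij_betw f (verts G) (verts H) \<and>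
     (\<forall>u\<in>verts G. \<forall>v\<in>verts G. (u, v) \<in> adj G \<longleftrightarrow> (f u, f v) \<in> adj H))"

end

theory Submission
  imports Defs
begin

definition deletable :: "'a sgraph \<Rightarrow> 'a \<Rightarrow> bool" where
  "deletable X v \<longleftrightarrow> leaf X v \<or> (\<exists>u. siblings X v u)"
definition rstep :: "'a sgraph \<Rightarrow> 'a sgraph \<Rightarrow> bool" where
  "rstep X Y \<longleftrightarrow> (\<exists>v. deletable X v \<and> Y = delete_vertices {v} X)"
definition normal :: "'a sgraph \<Rightarrow> bool" where
  "normal X \<longleftrightarrow> \<not>(\<exists>v. deletable X v)"

lemma simple_del: "simple_graph X \<Longrightarrow> simple_graph (delete_vertices T X)"
  unfolding simple_graph_def delete_vertices_def sym_def irrefl_def by auto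

lemma verts_del[simp]: "verts (delete_vertices T X) = verts X - T"
  by (simp add: delete_vertices_def)
lemma adj_del[simp]: "adj (delete_vertices T X) = adj X \<inter> ((verts X - T) \<times> (verts X - T))"
  by (simp add: delete_vertices_def)

lemma nbhd_sub: "simple_graph X \<Longrightarrow> nbhd X v \<subseteq> verts X"
  unfolding simple_graph_def nbhd_def by auto

lemma nbhd_del: "simple_graph X \<Longrightarrow> v \<in> verts X - T \<Longrightarrow> nbhd (delete_vertices T X) v = nbhd X v - T"
  unfolding simple_graph_def nbhd_def by auto

lemma cnbhd_del: "simple_graph X \<Longrightarrow> v \<in> verts X - T \<Longrightarrow> closed_nbhd (delete_vertices T X) v = closed_nbhd X v \<inter> (verts X - T)"
  unfolding simple_graph_def nbhd_def closed_nbhd_def by auto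

lemma del_del: "delete_vertices {v} (delete_vertices S X) = delete_vertices (insert v S) X"
  unfolding delete_vertices_def by auto

lemma del_empty: "simple_graph X \<Longrightarrow> delete_vertices {} X = X"
  unfolding delete_vertices_def simple_graph_def by (cases X) (auto simp: Int_absorb2)

lemma deletable_in: "deletable X v \<Longrightarrow> v \<in> verts X"
  unfolding deletable_def leaf_def siblings_def by auto

lemma leafE: assumes "leaf X v" obtains w where "nbhd X v = {w}"
  using assms unfolding leaf_def by (metis card_1_singletonE)

lemma sym_adj: "simple_graph X \<Longrightarrow> (u,v) \<in> adj X \<Longrightarrow> (v,u) \<in> adj X"
  unfolding simple_graph_def sym_def by auto
lemma irr_adj: "simple_graph X \<Longrightarrow> (u,u) \<notin> adj X"
  unfolding simple_graph_def irrefl_def by auto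
lemma adj_in: "simple_graph X \<Longrightarrow> (u,v) \<in> adj X \<Longrightarrow> u \<in> verts X \<and> v \<in> verts X"
  unfolding simple_graph_def by auto

lemma step_simple: "rstep X Y \<Longrightarrow> simple_graph X \<Longrightarrow> simple_graph Y"
  unfolding rstep_def using simple_del by blast
lemma steps_simple: "rstep\<^sup>*\<^sup>* X Y \<Longrightarrow> simple_graph X \<Longrightarrow> simple_graph Y"
  by (induction rule: rtranclp_induct) (auto intro: step_simple)

lemma step_card: "rstep X Y \<Longrightarrow> simple_graph X \<Longrightarrow> card (verts Y) < card (verts X)"
  unfolding rstep_def simple_graph_def using deletable_in
  by (auto intro!: card_Diff1_less)


lemma iso_refl: "graph_iso X X"
  unfolding graph_iso_def by (rule exI[of _ id]) auto

lemma iso_sym: assumes "graph_iso X Y" shows "graph_iso Y X"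
proof -
  obtain f where b: "bij_betw f (verts X) (verts Y)" and a: "\<forall>u\<in>verts X. \<forall>v\<in>verts X. (u, v) \<in> adj X \<longleftrightarrow> (f u, f v) \<in> adj Y"
    using assms unfolding graph_iso_def by blast
  let ?g = "inv_into (verts X) f"
  have b2: "bij_betw ?g (verts Y) (verts X)" using b by (rule bij_betw_inv_into)
  have "\<forall>u\<in>verts Y. \<forall>v\<in>verts Y. (u, v) \<in> adj Y \<longleftrightarrow> (?g u, ?g v) \<in> adj X"
  proof (intro ballI)
    fix u v assume u: "u \<in> verts Y" and v: "v \<in> verts Y"
    have "?g u \<in> verts X" "?g v \<in> verts X" using b2 u v bij_betwE by blast+
    then show "(u, v) \<in> adj Y \<longleftrightarrow> (?g u, ?g v) \<in> adj X"
      using a bij_betw_inv_into_right[OF b u] bij_betw_inv_into_right[OF b v] by metis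
  qed
  then show ?thesis using b2 unfolding graph_iso_def by blast
qed

lemma iso_trans: assumes "graph_iso X Y" "graph_iso Y Z" shows "graph_iso X Z"
proof -
  obtain f where b: "bij_betw f (verts X) (verts Y)" and a: "\<forall>u\<in>verts X. \<forall>v\<in>verts X. (u, v) \<in> adj X \<longleftrightarrow> (f u, f v) \<in> adj Y"
    using assms unfolding graph_iso_def by blast
  obtain g where b2: "bij_betw g (verts Y) (verts Z)" and a2: "\<forall>u\<in>verts Y. \<forall>v\<in>verts Y. (u, v) \<in> adj Y \<longleftrightarrow> (g u, g v) \<in> adj Z"
    using assms unfolding graph_iso_def by blast
  have "bij_betw (g \<circ> f) (verts X) (verts Z)" using b b2 by (rule bij_betw_trans)
  moreover have "\<forall>u\<in>verts X. \<forall>v\<in>verts X. (u, v) \<in> adj X \<longleftrightarrow> ((g \<circ> f) u, (g \<circ> f) v) \<in> adj Z"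
  proof (intro ballI)
    fix u v assume "u \<in> verts X" "v \<in> verts X"
    moreover have "f u \<in> verts Y" "f v \<in> verts Y" using b calculation bij_betwE by blast+
    ultimately show "(u, v) \<in> adj X \<longleftrightarrow> ((g \<circ> f) u, (g \<circ> f) v) \<in> adj Z"
      using a a2 by simp
  qed
  ultimately show ?thesis unfolding graph_iso_def by blast
qed

lemma iso_deletable:
  assumes sX: "simple_graph X" and sY: "simple_graph Y" and "graph_iso X Y" and d: "deletable X v"
  shows "\<exists>w. deletable Y w \<and> graph_iso (delete_vertices {v} X) (delete_vertices {w} Y)"
proof -
  obtain f where b: "bij_betw f (verts X) (verts Y)" and a: "\<forall>u\<in>verts X. \<forall>v\<in>verts X. (u, v) \<in> adj X \<longleftrightarrow> (f u, f v) \<in> adj Y"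
    using assms unfolding graph_iso_def by blast
  have inj: "inj_on f (verts X)" and img: "f ` verts X = verts Y" using b by (auto simp: bij_betw_def)
  have nb: "nbhd Y (f x) = f ` nbhd X x" if x: "x \<in> verts X" for x
  proof
    show "f ` nbhd X x \<subseteq> nbhd Y (f x)"
      using a x nbhd_sub[OF sX] unfolding nbhd_def by auto
    show "nbhd Y (f x) \<subseteq> f ` nbhd X x"
    proof
      fix w assume w: "w \<in> nbhd Y (f x)"
      then have "w \<in> verts Y" using nbhd_sub[OF sY] by auto
      then obtain u where u: "u \<in> verts X" "w = f u" using img by auto
      then have "(x, u) \<in> adj X" using a x w unfolding nbhd_def by auto
      then show "w \<in> f ` nbhd X x" using u unfolding nbhd_def by auto
    qed
  qed
  have cnb: "closed_nbhd Y (f x) = f ` closed_nbhd X x" if x: "x \<in> verts X" for x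
    using nb[OF x] unfolding closed_nbhd_def by auto
  have vX: "v \<in> verts X" using d by (rule deletable_in)
  have "deletable Y (f v)"
    using d unfolding deletable_def
  proof
    assume l: "leaf X v"
    have "card (nbhd Y (f v)) = card (nbhd X v)"
      using nb[OF vX] card_image inj_on_subset[OF inj nbhd_sub[OF sX]] by metis
    then have "leaf Y (f v)" using l vX img unfolding leaf_def by auto
    then show "leaf Y (f v) \<or> (\<exists>u. siblings Y (f v) u)" by blast
  next
    assume "\<exists>u. siblings X v u"
    then obtain u where s: "siblings X v u" by blast
    then have "siblings Y (f v) (f u)"
      unfolding siblings_def using cnb img inj by (auto simp: inj_on_def)
    then show "leaf Y (f v) \<or> (\<exists>u. siblings Y (f v) u)" by blast
  qed
  moreover have "graph_iso (delete_vertices {v} X) (delete_vertices {f v} Y)"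
  proof -
    have "bij_betw f (verts X - {v}) (verts Y - {f v})"
      using b vX bij_betwE by (intro bij_betw_DiffI) auto
    moreover have "\<forall>x\<in>verts X - {v}. \<forall>y\<in>verts X - {v}. (x, y) \<in> adj X \<longleftrightarrow> (f x, f y) \<in> adj Y"
      using a by auto
    ultimately show ?thesis unfolding graph_iso_def verts_del adj_del
      by (intro exI[of _ f]) (auto dest: bij_betwE)
  qed
  ultimately show ?thesis by blast
qed


lemma siblings_sym: "siblings X a b \<Longrightarrow> siblings X b a"
  unfolding siblings_def by auto

lemma still_deletable:
  assumes sX: "simple_graph X" and db: "deletable X b" and da: "deletable X a"
    and ne: "a \<noteq> b" and ns: "\<not> siblings X a b"
  shows "deletable (delete_vertices {a} X) b"
proof -
  have bV: "b \<in> verts X" using db by (rule deletable_in)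
  have aV: "a \<in> verts X" using da by (rule deletable_in)
  have bV': "b \<in> verts X - {a}" using bV ne by auto
  show ?thesis using db unfolding deletable_def
  proof
    assume l: "leaf X b"
    then obtain w where w: "nbhd X b = {w}" by (rule leafE)
    have bw: "(b, w) \<in> adj X" using w unfolding nbhd_def by auto
    show "leaf (delete_vertices {a} X) b \<or> (\<exists>u. siblings (delete_vertices {a} X) b u)"
    proof (cases "w = a")
      case False
      then have "nbhd (delete_vertices {a} X) b = {w}" using nbhd_del[OF sX bV'] w by auto
      then show ?thesis using bV' unfolding leaf_def by auto
    next
      case True
      have ab: "(a, b) \<in> adj X" using sym_adj[OF sX bw] True by simp
      from da show ?thesis unfolding deletable_def
      proof
        assume "leaf X a"
        then obtain z where z: "nbhd X a = {z}" by (rule leafE)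
        then have "z = b" using ab unfolding nbhd_def by auto
        then have "closed_nbhd X a = closed_nbhd X b"
          using z w True unfolding closed_nbhd_def by auto
        then have "siblings X a b" using aV bV ne unfolding siblings_def by auto
        then show ?thesis using ns by blast
      next
        assume "\<exists>u. siblings X a u"
        then obtain s where s: "siblings X a s" by blast
        have "b \<in> closed_nbhd X a" using ab unfolding closed_nbhd_def nbhd_def by simp
        then have "b \<in> closed_nbhd X s" using s unfolding siblings_def by simp
        moreover have "s \<noteq> b" using s ns by auto
        ultimately have sb: "(s, b) \<in> adj X" unfolding closed_nbhd_def nbhd_def by auto
        have "s \<in> nbhd X b" using sym_adj[OF sX sb] unfolding nbhd_def by simp
        then have "s = a" using w True by auto
        then show ?thesis using s unfolding siblings_def by auto
      qed
    qed
  next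
    assume "\<exists>u. siblings X b u"
    then obtain s where s: "siblings X b s" by blast
    have "s \<noteq> a"
    proof
      assume "s = a"
      then have "siblings X a b" using siblings_sym[OF s] by simp
      with ns show False by contradiction
    qed
    then have sV': "s \<in> verts X - {a}" using s unfolding siblings_def by auto
    have "closed_nbhd X b = closed_nbhd X s" "b \<noteq> s" using s unfolding siblings_def by auto
    then have "siblings (delete_vertices {a} X) b s"
      unfolding siblings_def using bV' sV' by (simp add: cnbhd_del[OF sX bV'] cnbhd_del[OF sX sV'])
    then show "leaf (delete_vertices {a} X) b \<or> (\<exists>u. siblings (delete_vertices {a} X) b u)" by blast
  qed
qed

lemma swap_iso:
  assumes sX: "simple_graph X" and s: "siblings X a b"
  shows "graph_iso (delete_vertices {a} X) (delete_vertices {b} X)"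
proof -
  note [[simp_trace=false]]
  define f where "f x = (if x = b then a else x)" for x
  have ab: "a \<noteq> b" "a \<in> verts X" "b \<in> verts X" and c: "closed_nbhd X a = closed_nbhd X b"
    using s unfolding siblings_def by auto
  have "bij_betw f (verts X - {a}) (verts X - {b})"
    unfolding bij_betw_def inj_on_def f_def using ab by auto
  moreover have "(x, y) \<in> adj X \<longleftrightarrow> (f x, f y) \<in> adj X"
    if x: "x \<in> verts X - {a}" and y: "y \<in> verts X - {a}" for x y
  proof -
    have key: "(b, z) \<in> adj X \<longleftrightarrow> (a, z) \<in> adj X" if "z \<noteq> a" "z \<noteq> b" for z
    proof -
      have "z \<in> closed_nbhd X b \<longleftrightarrow> z \<in> closed_nbhd X a" using c by simp
      then show ?thesis using that unfolding closed_nbhd_def nbhd_def by simp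
    qed
    have xa: "x \<noteq> a" and ya: "y \<noteq> a" using x y by auto
    show ?thesis
    proof (cases "x = b")
      case xb: True
      show ?thesis
      proof (cases "y = b")
        case True
        then show ?thesis using xb irr_adj[OF sX] unfolding f_def by simp
      next
        case False
        then show ?thesis using xb key[OF ya False] unfolding f_def by simp
      qed
    next
      case xb: False
      show ?thesis
      proof (cases "y = b")
        case True
        have "(x, b) \<in> adj X \<longleftrightarrow> (b, x) \<in> adj X" using sym_adj[OF sX] by blast
        moreover have "(x, a) \<in> adj X \<longleftrightarrow> (a, x) \<in> adj X" using sym_adj[OF sX] by blast
        ultimately show ?thesis using True xb key[OF xa xb] unfolding f_def by simp
      next
        case False
        then show ?thesis using xb unfolding f_def by simp
      qed
    qed
  qed
  ultimately show ?thesis unfolding graph_iso_def verts_del adj_del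
    by (intro exI[of _ f]) (auto dest: bij_betwE)
qed

lemma normal_exists:
  "simple_graph X \<Longrightarrow> \<exists>N. rstep\<^sup>*\<^sup>* X N \<and> normal N"
proof (induction "card (verts X)" arbitrary: X rule: less_induct)
  case less
  show ?case
  proof (cases "normal X")
    case True then show ?thesis by blast
  next
    case False
    then obtain v where d: "deletable X v" unfolding normal_def by blast
    let ?Y = "delete_vertices {v} X"
    have st: "rstep X ?Y" using d unfolding rstep_def by blast
    have "card (verts ?Y) < card (verts X)" using step_card[OF st less.prems] .
    moreover have "simple_graph ?Y" using step_simple[OF st less.prems] .
    ultimately obtain N where "rstep\<^sup>*\<^sup>* ?Y N" "normal N"
      using less.hyps by blast
    then show ?thesis using st by (meson converse_rtranclp_into_rtranclp)
  qed
qed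

lemma normal_iso: "simple_graph X \<Longrightarrow> simple_graph Y \<Longrightarrow> graph_iso X Y \<Longrightarrow> normal X \<Longrightarrow> normal Y"
proof -
  assume sX: "simple_graph X" and sY: "simple_graph Y" and i: "graph_iso X Y" and n: "normal X"
  show "normal Y" unfolding normal_def
  proof
    assume "\<exists>v. deletable Y v"
    then obtain v where "deletable Y v" by blast
    then obtain w where "deletable X w" using iso_deletable[OF sY sX iso_sym[OF i]] by blast
    then show False using n unfolding normal_def by blast
  qed
qed

lemma normal_steps: "rstep\<^sup>*\<^sup>* X N \<Longrightarrow> normal X \<Longrightarrow> N = X"
  by (induction rule: converse_rtranclp_induct) (auto simp: normal_def rstep_def)

lemma unique_nf:
  "simple_graph (X :: 'a sgraph) \<Longrightarrow> simple_graph (Y :: 'a sgraph) \<Longrightarrow> graph_iso X Y \<Longrightarrow> rstep\<^sup>*\<^sup>* X N1 \<Longrightarrow> normal N1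
   \<Longrightarrow> rstep\<^sup>*\<^sup>* Y N2 \<Longrightarrow> normal N2 \<Longrightarrow> graph_iso N1 N2"
proof (induction "card (verts X)" arbitrary: X Y N1 N2 rule: less_induct)
  case less
  note sX = less.prems(1) and sY = less.prems(2) and iXY = less.prems(3)
  show ?case
  proof (cases "normal X")
    case True
    then have "N1 = X" using less.prems(4) normal_steps by blast
    moreover have "normal Y" using normal_iso[OF sX sY iXY True] .
    then have "N2 = Y" using less.prems(6) normal_steps by blast
    ultimately show ?thesis using iXY by simp
  next
    case False
    then have "N1 \<noteq> X" using less.prems(5) by blast
    then obtain X1 where s1: "rstep X X1" and r1: "rstep\<^sup>*\<^sup>* X1 N1"
      using less.prems(4) converse_rtranclpE[of rstep X N1] by blast
    obtain a where da: "deletable X a" and X1: "X1 = delete_vertices {a} X"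
      using s1 unfolding rstep_def by blast
    have "\<not> normal Y" using normal_iso[OF sY sX iso_sym[OF iXY]] False by blast
    then have "N2 \<noteq> Y" using less.prems(7) by blast
    then obtain Y1 where s2: "rstep Y Y1" and r2: "rstep\<^sup>*\<^sup>* Y1 N2"
      using less.prems(6) converse_rtranclpE[of rstep Y N2] by blast
    obtain b where db: "deletable Y b" and Y1: "Y1 = delete_vertices {b} Y"
      using s2 unfolding rstep_def by blast
    obtain b' where db': "deletable X b'" and i2: "graph_iso Y1 (delete_vertices {b'} X)"
      using iso_deletable[OF sY sX iso_sym[OF iXY] db] Y1 by blast
    define X2 where "X2 = delete_vertices {b'} X"
    have i2': "graph_iso X2 Y1" using iso_sym[OF i2] X2_def by simp
    have sX1: "simple_graph X1" using s1 sX step_simple by blast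
    have sX2: "simple_graph X2" using X2_def sX simple_del by blast
    have sY1: "simple_graph Y1" using s2 sY step_simple by blast
    have c1: "card (verts X1) < card (verts X)" using s1 sX step_card by blast
    have s2X: "rstep X X2" using db' X2_def unfolding rstep_def by blast
    have c2: "card (verts X2) < card (verts X)" using s2X sX step_card by blast
    show ?thesis
    proof (cases "a = b'")
      case True
      then have "graph_iso X1 Y1" using X1 X2_def i2' by simp
      then show ?thesis using less.hyps[OF c1 sX1 sY1 _ r1 less.prems(5) r2 less.prems(7)] by blast
    next
      case ne: False
      show ?thesis
      proof (cases "siblings X a b'")
        case True
        then have "graph_iso X1 X2" using swap_iso[OF sX] X1 X2_def by blast
        then have "graph_iso X1 Y1" using i2' by (rule iso_trans)
        then show ?thesis using less.hyps[OF c1 sX1 sY1 _ r1 less.prems(5) r2 less.prems(7)] by blast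
      next
        case False
        have d1: "deletable X1 b'" using still_deletable[OF sX db' da ne False] X1 by simp
        have nsb: "\<not> siblings X b' a"
        proof
          assume "siblings X b' a"
          then have "siblings X a b'" by (rule siblings_sym)
          with False show False by contradiction
        qed
        have d2: "deletable X2 a" using still_deletable[OF sX da db' _ nsb] ne X2_def by auto
        define Z where "Z = delete_vertices {b'} X1"
        have Z2: "Z = delete_vertices {a} X2" unfolding Z_def X1 X2_def del_del by (simp add: insert_commute)
        have sZ: "simple_graph Z" using Z_def sX1 simple_del by blast
        obtain M where rM: "rstep\<^sup>*\<^sup>* Z M" and nM: "normal M" using normal_exists[OF sZ] by blast
        have "rstep X1 Z" using d1 Z_def unfolding rstep_def by blast
        then have r1M: "rstep\<^sup>*\<^sup>* X1 M" using rM by (meson converse_rtranclp_into_rtranclp)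
        have "rstep X2 Z" using d2 Z2 unfolding rstep_def by blast
        then have r2M: "rstep\<^sup>*\<^sup>* X2 M" using rM by (meson converse_rtranclp_into_rtranclp)
        have "graph_iso N1 M" using less.hyps[OF c1 sX1 sX1 iso_refl[of X1] r1 less.prems(5) r1M nM] .
        moreover have "graph_iso M N2" using less.hyps[OF c2 sX2 sY1 i2' r2M nM r2 less.prems(7)] .
        ultimately show ?thesis by (rule iso_trans)
      qed
    qed
  qed
qed


lemma del_steps:
  assumes sX: "simple_graph X" and fin: "finite S"
  shows "(\<forall>T v. T \<subseteq> S \<longrightarrow> v \<in> S \<longrightarrow> v \<notin> T \<longrightarrow> deletable (delete_vertices T X) v)
         \<Longrightarrow> rstep\<^sup>*\<^sup>* X (delete_vertices S X)"
  using fin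
proof (induction S rule: finite_induct)
  case empty
  then show ?case using del_empty[OF sX] by simp
next
  case (insert v S)
  note P = insert.prems[rule_format]
  have "\<forall>T w. T \<subseteq> S \<longrightarrow> w \<in> S \<longrightarrow> w \<notin> T \<longrightarrow> deletable (delete_vertices T X) w"
  proof (intro allI impI)
    fix T w assume "T \<subseteq> S" "w \<in> S" "w \<notin> T"
    then show "deletable (delete_vertices T X) w" using P[of T w] by auto
  qed
  then have r: "rstep\<^sup>*\<^sup>* X (delete_vertices S X)" by (rule insert.IH)
  have "deletable (delete_vertices S X) v" using P[of S v] insert.hyps(2) by auto
  moreover have "delete_vertices (insert v S) X = delete_vertices {v} (delete_vertices S X)"
    by (rule del_del[symmetric])
  ultimately have "rstep (delete_vertices S X) (delete_vertices (insert v S) X)"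
    unfolding rstep_def by blast
  then show ?case using r by (meson rtranclp.rtrancl_into_rtrancl)
qed

definition noadj :: "'a sgraph \<Rightarrow> bool" where
  "noadj X \<longleftrightarrow> (\<forall>u v. leaf X u \<longrightarrow> leaf X v \<longrightarrow> (u, v) \<notin> adj X)"

lemma leaves_steps:
  assumes sX: "simple_graph X" and na: "noadj X" and S: "S \<subseteq> leaves X"
  shows "rstep\<^sup>*\<^sup>* X (delete_vertices S X)"
proof -
  have fin: "finite S" using S sX unfolding leaves_def leaf_def simple_graph_def
    by (metis (no_types, lifting) mem_Collect_eq finite_subset subsetI subset_iff)
  show ?thesis
  proof (rule del_steps[OF sX fin], intro allI impI)
    fix T v assume T: "T \<subseteq> S" and v: "v \<in> S" and vT: "v \<notin> T"
    have l: "leaf X v" using v S unfolding leaves_def by auto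
    then obtain w where w: "nbhd X v = {w}" by (rule leafE)
    have vw: "(v, w) \<in> adj X" using w unfolding nbhd_def by auto
    have "w \<notin> S" using na l vw S unfolding noadj_def leaves_def by auto
    then have wT: "w \<notin> T" using T by auto
    have vV: "v \<in> verts X - T" using l vT unfolding leaf_def by auto
    have "nbhd (delete_vertices T X) v = {w}" using nbhd_del[OF sX vV] w wT by auto
    then show "deletable (delete_vertices T X) v" using vV unfolding deletable_def leaf_def by auto
  qed
qed

lemma sib_rep_prop:
  assumes "x \<in> verts X"
  shows "sib_rep X x \<in> verts X \<and> closed_nbhd X (sib_rep X x) = closed_nbhd X x"
proof -
  have "\<exists>u. u \<in> {w \<in> verts X. closed_nbhd X w = closed_nbhd X x}" using assms by blast
  then show ?thesis unfolding sib_rep_def by (metis (mono_tags, lifting) someI_ex mem_Collect_eq)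
qed

lemma sib_rep_eq: "closed_nbhd X x = closed_nbhd X y \<Longrightarrow> sib_rep X x = sib_rep X y"
  unfolding sib_rep_def by (simp only:)

lemma rho_eq: "rho X = delete_vertices (verts X - sib_rep X ` verts X) X"
proof -
  have "sib_rep X x \<in> verts X" if "x \<in> verts X" for x using sib_rep_prop[OF that] by simp
  then have sub: "sib_rep X ` verts X \<subseteq> verts X" by (rule image_subsetI)
  then have e: "verts X - (verts X - sib_rep X ` verts X) = sib_rep X ` verts X" by (rule double_diff) simp
  show ?thesis unfolding rho_def delete_vertices_def e by (rule refl)
qed

lemma rho_simple: "simple_graph X \<Longrightarrow> simple_graph (rho X)"
  unfolding rho_eq by (rule simple_del)

lemma rho_steps:
  assumes sX: "simple_graph X"
  shows "rstep\<^sup>*\<^sup>* X (rho X)"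
proof -
  let ?R = "sib_rep X ` verts X"
  have fin: "finite (verts X - ?R)" using sX unfolding simple_graph_def by auto
  show ?thesis unfolding rho_eq
  proof (rule del_steps[OF sX fin], intro allI impI)
    fix T v assume T: "T \<subseteq> verts X - ?R" and v: "v \<in> verts X - ?R" and vT: "v \<notin> T"
    let ?r = "sib_rep X v"
    have vX: "v \<in> verts X" using v by simp
    have rp: "?r \<in> verts X" "closed_nbhd X ?r = closed_nbhd X v" using sib_rep_prop[OF vX] by auto
    have rR: "?r \<in> ?R" using v by auto
    then have rT: "?r \<notin> T" using T by auto
    have ne: "v \<noteq> ?r" using v rR by auto
    have vV: "v \<in> verts X - T" using v vT by auto
    have rV: "?r \<in> verts X - T" using rp rT by auto
    have "siblings (delete_vertices T X) v ?r"
      unfolding siblings_def using cnbhd_del[OF sX vV] cnbhd_del[OF sX rV] rp vV rV ne by auto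
    then show "deletable (delete_vertices T X) v" unfolding deletable_def by blast
  qed
qed

lemma rho_noadj:
  assumes sX: "simple_graph X"
  shows "noadj (rho X)"
  unfolding noadj_def
proof (intro allI impI notI)
  fix a b assume la: "leaf (rho X) a" and lb: "leaf (rho X) b" and ab: "(a, b) \<in> adj (rho X)"
  let ?R = "sib_rep X ` verts X"
  have sR: "simple_graph (rho X)" using rho_simple[OF sX] .
  have vr: "verts (rho X) = ?R" and ar: "adj (rho X) = adj X \<inter> (?R \<times> ?R)" unfolding rho_def by auto
  have aR: "a \<in> ?R" and bR: "b \<in> ?R" and abX: "(a, b) \<in> adj X" using ab ar by auto
  have baX: "(b, a) \<in> adj X" using sym_adj[OF sX abX] .
  obtain wa where wa: "nbhd (rho X) a = {wa}" using la by (rule leafE)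
  have nA: "nbhd (rho X) a = {b}" using wa ab unfolding nbhd_def by auto
  obtain wb where wb: "nbhd (rho X) b = {wb}" using lb by (rule leafE)
  have nB: "nbhd (rho X) b = {a}" using wb ab sym_adj[OF sR ab] unfolding nbhd_def by auto
  have repfix: "sib_rep X r = r" if "r \<in> ?R" for r
  proof -
    from that obtain x where x: "r = sib_rep X x" "x \<in> verts X" by (rule imageE)
    have "closed_nbhd X r = closed_nbhd X x" using sib_rep_prop[OF x(2)] x(1) by simp
    then have "sib_rep X r = sib_rep X x" by (rule sib_rep_eq)
    then show ?thesis using x(1) by simp
  qed
  have incl: "closed_nbhd X p \<subseteq> closed_nbhd X q"
    if pR: "p \<in> ?R" and qR: "q \<in> ?R" and pq: "(p, q) \<in> adj X" and qp: "(q, p) \<in> adj X"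
      and np: "nbhd (rho X) p = {q}" for p q
  proof
    fix c assume c: "c \<in> closed_nbhd X p"
    show "c \<in> closed_nbhd X q"
    proof (cases "c = p \<or> c = q")
      case True then show ?thesis using qp unfolding closed_nbhd_def nbhd_def by auto
    next
      case False
      then have pc: "(p, c) \<in> adj X" using c unfolding closed_nbhd_def nbhd_def by auto
      then have cV: "c \<in> verts X" using adj_in[OF sX] by blast
      let ?r = "sib_rep X c"
      have rp: "?r \<in> verts X" "closed_nbhd X ?r = closed_nbhd X c" using sib_rep_prop[OF cV] by auto
      have rR: "?r \<in> ?R" using cV by auto
      have "p \<in> closed_nbhd X c" using sym_adj[OF sX pc] unfolding closed_nbhd_def nbhd_def by auto
      then have "p \<in> closed_nbhd X ?r" using rp by simp
      then have "?r = p \<or> (?r, p) \<in> adj X" unfolding closed_nbhd_def nbhd_def by auto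
      then show ?thesis
      proof
        assume "?r = p"
        then have "q \<in> closed_nbhd X c" using rp pq unfolding closed_nbhd_def nbhd_def by auto
        then have "(c, q) \<in> adj X" using False unfolding closed_nbhd_def nbhd_def by auto
        then have "(q, c) \<in> adj X" by (rule sym_adj[OF sX])
        then show ?thesis unfolding closed_nbhd_def nbhd_def by simp
      next
        assume "(?r, p) \<in> adj X"
        then have "(p, ?r) \<in> adj X" by (rule sym_adj[OF sX])
        then have "?r \<in> nbhd (rho X) p" using rR pR ar unfolding nbhd_def by simp
        then have "?r = q" using np by auto
        then have "c \<in> closed_nbhd X q" using rp unfolding closed_nbhd_def by auto
        then show ?thesis .
      qed
    qed
  qed
  have "closed_nbhd X a = closed_nbhd X b"
    using incl[OF aR bR abX baX nA] incl[OF bR aR baX abX nB] by blast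
  then have "sib_rep X a = sib_rep X b" by (rule sib_rep_eq)
  then have "a = b" using repfix aR bR by metis
  then show False using abX irr_adj[OF sX] by simp
qed


lemma lambda_simple: "simple_graph X \<Longrightarrow> simple_graph (lambda X)"
  unfolding lambda_def by (rule simple_del)

lemma F_inv:
  assumes "simple_graph X" "noadj X"
  shows "rstep\<^sup>*\<^sup>* X ((rho \<circ> lambda) X) \<and> simple_graph ((rho \<circ> lambda) X) \<and> noadj ((rho \<circ> lambda) X)"
proof -
  have r1: "rstep\<^sup>*\<^sup>* X (lambda X)" unfolding lambda_def using leaves_steps[OF assms] by blast
  have s1: "simple_graph (lambda X)" using lambda_simple assms by blast
  have r2: "rstep\<^sup>*\<^sup>* (lambda X) (rho (lambda X))" using rho_steps[OF s1] .
  show ?thesis using r1 r2 rho_simple[OF s1] rho_noadj[OF s1] by simp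
qed

lemma iter_inv:
  assumes "simple_graph X" "noadj X"
  shows "rstep\<^sup>*\<^sup>* X (((rho \<circ> lambda) ^^ k) X) \<and> simple_graph (((rho \<circ> lambda) ^^ k) X)
         \<and> noadj (((rho \<circ> lambda) ^^ k) X)"
proof (induction k)
  case 0 then show ?case using assms by simp
next
  case (Suc k)
  let ?F = "rho \<circ> lambda"
  have ih1: "rstep\<^sup>*\<^sup>* X ((?F ^^ k) X)" and ih2: "simple_graph ((?F ^^ k) X)"
    and ih3: "noadj ((?F ^^ k) X)" using Suc.IH by blast+
  have F: "rstep\<^sup>*\<^sup>* ((?F ^^ k) X) (?F ((?F ^^ k) X)) \<and> simple_graph (?F ((?F ^^ k) X)) \<and> noadj (?F ((?F ^^ k) X))"
    by (rule F_inv[OF ih2 ih3])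
  have e: "(?F ^^ Suc k) X = ?F ((?F ^^ k) X)" by (simp only: funpow.simps comp_apply)
  show ?case unfolding e using F rtranclp_trans[OF ih1] by blast
qed

lemma rho_card_le: "finite (verts Y) \<Longrightarrow> card (verts (rho Y)) \<le> card (verts Y)"
proof -
  assume f: "finite (verts Y)"
  have "verts (rho Y) = sib_rep Y ` verts Y" unfolding rho_def by simp
  then show ?thesis using card_image_le[OF f, of "sib_rep Y"] by simp
qed

lemma F_card_less:
  assumes sX: "simple_graph X" and nn: "\<not> normal X"
  shows "card (verts ((rho \<circ> lambda) X)) < card (verts X)"
proof -
  have f: "finite (verts X)" using sX unfolding simple_graph_def by simp
  obtain v where d: "deletable X v" using nn unfolding normal_def by blast
  have e: "(rho \<circ> lambda) X = rho (lambda X)" by simp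
  show ?thesis
  proof (cases "\<exists>u. leaf X u")
    case True
    then obtain u where u: "leaf X u" by blast
    have vl: "verts (lambda X) = verts X - leaves X" unfolding lambda_def by simp
    have fl: "finite (verts (lambda X))" using f vl by simp
    have "card (verts (rho (lambda X))) \<le> card (verts (lambda X))" by (rule rho_card_le[OF fl])
    moreover have "verts (lambda X) \<subset> verts X"
    proof -
      have "u \<in> verts X" "u \<in> leaves X" using u unfolding leaf_def leaves_def by simp_all
      then show ?thesis using vl by blast
    qed
    then have "card (verts (lambda X)) < card (verts X)" by (rule psubset_card_mono[OF f])
    ultimately show ?thesis unfolding e by linarith
  next
    case False
    then have "leaves X = {}" unfolding leaves_def by simp
    then have lX: "lambda X = X" unfolding lambda_def using del_empty[OF sX] by simp
    have "\<exists>u. siblings X v u" using d False unfolding deletable_def by blast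
    then obtain u where s: "siblings X v u" by blast
    have sv: "v \<in> verts X" "u \<in> verts X" "v \<noteq> u" "closed_nbhd X v = closed_nbhd X u"
      using s unfolding siblings_def by simp_all
    have eq: "sib_rep X v = sib_rep X u" by (rule sib_rep_eq[OF sv(4)])
    have ni: "\<not> inj_on (sib_rep X) (verts X)"
    proof
      assume "inj_on (sib_rep X) (verts X)"
      then have "v = u" using inj_onD[OF _ eq sv(1) sv(2)] by blast
      then show False using sv(3) by contradiction
    qed
    have ne: "card (sib_rep X ` verts X) \<noteq> card (verts X)"
    proof
      assume "card (sib_rep X ` verts X) = card (verts X)"
      then have "inj_on (sib_rep X) (verts X)" by (rule eq_card_imp_inj_on[OF f])
      then show False using ni by contradiction
    qed
    have le: "card (sib_rep X ` verts X) \<le> card (verts X)" by (rule card_image_le[OF f])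
    have "verts (rho X) = sib_rep X ` verts X" unfolding rho_def by simp
    then show ?thesis unfolding e lX using ne le by simp
  qed
qed

lemma normal_iff: "normal X \<longleftrightarrow> no_leaves_no_siblings X"
  unfolding normal_def no_leaves_no_siblings_def deletable_def by blast

lemma reduction_prop:
  assumes sX: "simple_graph X" and na: "noadj X"
  shows "rstep\<^sup>*\<^sup>* X (reduction X) \<and> normal (reduction X)"
proof -
  let ?F = "rho \<circ> lambda"
  have ex: "\<exists>k. normal ((?F ^^ k) X)"
  proof (rule ccontr)
    assume "\<not> ?thesis"
    then have nn: "\<And>k. \<not> normal ((?F ^^ k) X)" by blast
    have "card (verts ((?F ^^ k) X)) + k \<le> card (verts X)" for k
    proof (induction k)
      case 0 then show ?case by simp
    next
      case (Suc k)
      have "card (verts ((?F ^^ Suc k) X)) < card (verts ((?F ^^ k) X))"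
        using F_card_less[OF conjunct1[OF conjunct2[OF iter_inv[OF sX na]]] nn]
        by (simp only: funpow.simps comp_apply)
      then show ?case using Suc.IH by linarith
    qed
    from this[of "Suc (card (verts X))"] show False by simp
  qed
  then have "no_leaves_no_siblings ((?F ^^ (LEAST k. no_leaves_no_siblings ((?F ^^ k) X))) X)"
    unfolding normal_iff by (rule LeastI_ex)
  then show ?thesis unfolding reduction_def normal_iff using iter_inv[OF sX na] by blast
qed

lemma connected_noadj:
  assumes sG: "simple_graph G" and cG: "connected_graph G" and nK: "\<not> is_K2 G"
  shows "noadj G"
  unfolding noadj_def
proof (intro allI impI notI)
  fix u v assume lu: "leaf G u" and lv: "leaf G v" and uv: "(u, v) \<in> adj G"
  obtain a where a: "nbhd G u = {a}" using lu by (rule leafE)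
  have nu: "nbhd G u = {v}" using a uv unfolding nbhd_def by auto
  obtain b where b: "nbhd G v = {b}" using lv by (rule leafE)
  have nv: "nbhd G v = {u}" using b sym_adj[OF sG uv] unfolding nbhd_def by auto
  have uV: "u \<in> verts G" and vV: "v \<in> verts G" using adj_in[OF sG uv] by auto
  have "w \<in> {u, v}" if "(u, w) \<in> (adj G)\<^sup>*" for w
    using that
  proof (induction rule: rtrancl_induct)
    case base then show ?case by simp
  next
    case (step y z)
    then have "z \<in> nbhd G y" unfolding nbhd_def by auto
    then show ?case using step nu nv by auto
  qed
  then have "verts G = {u, v}" using cG uV vV unfolding connected_graph_def by blast
  moreover have "u \<noteq> v" using uv irr_adj[OF sG] by auto
  ultimately show False using nK uv unfolding is_K2_def by blast
qed

theorem corollary5p3: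
  fixes G :: "'a sgraph" and U :: "'a set"
  assumes "simple_graph G" and "connected_graph G" and "\<not> is_K2 G"
    and "U \<subseteq> leaves G"
  shows "graph_iso (reduction (rho (lambda_S U G))) (reduction G)"
proof -
  have na: "noadj G" using connected_noadj assms by blast
  have r1: "rstep\<^sup>*\<^sup>* G (lambda_S U G)" unfolding lambda_S_def using leaves_steps[OF assms(1) na assms(4)] .
  have s1: "simple_graph (lambda_S U G)" unfolding lambda_S_def using simple_del assms(1) by blast
  let ?H = "rho (lambda_S U G)"
  have r2: "rstep\<^sup>*\<^sup>* G ?H" using r1 rho_steps[OF s1] by (rule rtranclp_trans)
  have sH: "simple_graph ?H" using rho_simple[OF s1] .
  have nH: "noadj ?H" using rho_noadj[OF s1] .
  have rH0: "rstep\<^sup>*\<^sup>* ?H (reduction ?H)" "normal (reduction ?H)"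
    using reduction_prop[OF sH nH] by auto
  have rH: "rstep\<^sup>*\<^sup>* G (reduction ?H)" "normal (reduction ?H)"
    using rtranclp_trans[OF r2 rH0(1)] rH0(2) by auto
  have rG: "rstep\<^sup>*\<^sup>* G (reduction G)" "normal (reduction G)"
    using reduction_prop[OF assms(1) na] by auto
  show ?thesis using unique_nf[OF assms(1) assms(1) iso_refl rH rG] .
qed

end
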